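(* Let $\mathcal R$ be the set of natural numbers $N$ satisfying Robin's inequality $\sigma(N)<e^\gamma N\log(\log N)$. Then $\mathcal R$ has natural density $1$, i.e. $\lim_{s\to\infty}\#(\mathcal R\cap\{1,\dots,s\})/s=1$.
   Context: $\sigma(N)=\sum_{d\mid N}d$ is the sum-of-divisors function and $\gamma$ is the Euler–Mascheroni constant. (For $N\le 2$, $\log\log N$ is undefined or negative and such $N$ are not in $\mathcal R$; this does not affect the density.) *)

theory Defs
  imports "HOL-Analysis.Analysis"
begin

definition divisor_sum :: "nat \<Rightarrow> nat" where
  "divisor_sum N = (\<Sum>d\<in>{d. d dvd N}. d)"

text \<open>Robin's set: N with sigma(N) < e^gamma N log log N; N <= 2 excluded as log log N is
  undefined or negative there.\<close>
definition robin_set :: "nat set" where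
  "robin_set = {N. 2 < N \<and> real (divisor_sum N) < exp euler_mascheroni * real N * ln (ln (real N))}"

end

theory Submission
  imports Defs
begin

lemma sig_div: assumes "N > 0"
  shows "real (divisor_sum N) / real N = (\<Sum>d\<in>{d. d dvd N}. 1 / real d)"
proof -
  have fin: "finite {d. d dvd N}" using assms by simp
  have "divisor_sum N = (\<Sum>d\<in>{d. d dvd N}. N div d)"
    unfolding divisor_sum_def
    by (rule sum.reindex_bij_witness[where i="\<lambda>d. N div d" and j="\<lambda>d. N div d"])
       (use assms in \<open>auto simp: div_div_eq_right dvd_div_eq_mult intro: dvd_div_mult_self\<close>)
  hence "real (divisor_sum N) = (\<Sum>d\<in>{d. d dvd N}. real N / real d)"
    by (simp add: real_of_nat_div)
  thus ?thesis using assms by (simp add: sum_divide_distrib)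
qed

lemma inv_sq_sum: "n \<ge> 1 \<Longrightarrow> (\<Sum>d=1..n. 1 / (real d)^2) \<le> 2 - 1 / real n"
proof (induction n rule: dec_induct)
  case base then show ?case by simp
next
  case (step n)
  have "(\<Sum>d=1..Suc n. 1 / (real d)^2) = (\<Sum>d=1..n. 1 / (real d)^2) + 1/(real n + 1)^2" by simp
  also have "\<dots> \<le> 2 - 1/real n + 1/(real n + 1)^2" using step by simp
  also have "\<dots> \<le> 2 - 1/(real n + 1)"
  proof -
    have "1/(real n + 1)^2 \<le> 1/real n - 1/(real n + 1)"
    proof -
      have n: "real n \<ge> 1" using step(1) by simp
      have "1/real n - 1/(real n + 1) = 1/(real n * (real n + 1))" using n by (simp add: field_simps)
      moreover have "1/(real n + 1)^2 \<le> 1/(real n * (real n + 1))"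
        using n by (intro divide_left_mono) (auto simp: power2_eq_square intro: mult_right_mono)
      ultimately show ?thesis by simp
    qed
    thus ?thesis by simp
  qed
  finally show ?case by (simp add: add.commute)
qed

lemma card_mult: assumes "d \<ge> 1" shows "real (card {N\<in>{1..s}. d dvd N}) \<le> real s / real d"
proof -
  have "card {N\<in>{1..s}. d dvd N} \<le> card {1..s div d}"
  proof (rule card_inj_on_le[where f="\<lambda>N. N div d"])
    show "inj_on (\<lambda>N. N div d) {N \<in> {1..s}. d dvd N}"
      by (auto simp: inj_on_def elim!: dvdE)
    show "(\<lambda>N. N div d) ` {N \<in> {1..s}. d dvd N} \<subseteq> {1..s div d}"
      using assms by (auto elim!: dvdE simp: less_eq_div_iff_mult_less_eq mult.commute)
  qed auto
  hence "real (card {N\<in>{1..s}. d dvd N}) \<le> real (s div d)" by simp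
  also have "\<dots> \<le> real s / real d" 
  proof -
    have "real (s div d) * real d \<le> real s"
      by (metis of_nat_le_iff of_nat_mult div_times_less_eq_dividend)
    thus ?thesis using assms by (simp add: le_divide_eq)
  qed
  finally show ?thesis .
qed

lemma avg_bound: "(\<Sum>N\<in>{1..s}. real (divisor_sum N) / real N) \<le> 2 * real s"
proof -
  have "(\<Sum>N\<in>{1..s}. real (divisor_sum N) / real N)
      = (\<Sum>N\<in>{1..s}. \<Sum>d\<in>{d\<in>{1..s}. d dvd N}. 1 / real d)"
  proof (rule sum.cong[OF refl])
    fix N assume N: "N \<in> {1..s}"
    have "{d. d dvd N} = {d\<in>{1..s}. d dvd N}"
      using N by (auto dest: dvd_imp_le intro: Nat.gr0I)
    thus "real (divisor_sum N) / real N = (\<Sum>d\<in>{d\<in>{1..s}. d dvd N}. 1 / real d)"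
      using N sig_div[of N] by simp
  qed
  also have "\<dots> = (\<Sum>d\<in>{1..s}. \<Sum>N\<in>{N\<in>{1..s}. d dvd N}. 1 / real d)"
    by (rule sum.swap_restrict) auto
  also have "\<dots> = (\<Sum>d\<in>{1..s}. real (card {N\<in>{1..s}. d dvd N}) / real d)" by simp
  also have "\<dots> \<le> (\<Sum>d\<in>{1..s}. real s * (1 / (real d)^2))"
  proof (rule sum_mono)
    fix d assume d: "d \<in> {1..s}"
    have "real (card {N\<in>{1..s}. d dvd N}) / real d \<le> (real s / real d) / real d"
      using card_mult[of d s] d by (intro divide_right_mono) auto
    thus "real (card {N\<in>{1..s}. d dvd N}) / real d \<le> real s * (1 / (real d)^2)"
      by (simp add: power2_eq_square field_simps)
  qed
  also have "\<dots> = real s * (\<Sum>d=1..s. 1 / (real d)^2)" by (simp add: sum_distrib_left)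
  also have "\<dots> \<le> real s * 2"
  proof (cases "s = 0")
    case False
    thus ?thesis using inv_sq_sum[of s] by (intro mult_left_mono) (auto, smt (verit) divide_nonneg_nonneg of_nat_0_le_iff)
  qed simp
  finally show ?thesis by simp
qed

lemma bad_bound:
  assumes K: "K \<ge> 3"
  shows "real (card ({1..s} - robin_set))
     \<le> real K + 2 * real s / (exp euler_mascheroni * ln (ln (real K)))"
proof -
  define c :: real where "c = exp euler_mascheroni"
  define L where "L = c * ln (ln (real K))"
  have c0: "c > 0" unfolding c_def by simp
  have lnK: "ln (real K) > 1"
  proof -
    have "exp 1 < (3::real)" using e_less_272 by linarith
    hence "ln (exp 1) < ln (real K)" using K
      by (subst ln_less_cancel_iff) auto
    thus ?thesis by simp
  qed
  have L0: "L > 0" unfolding L_def using c0 lnK by simp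
  define B where "B = {N\<in>{1..s}. K < N \<and> L \<le> real (divisor_sum N) / real N}"
  have sub: "{1..s} - robin_set \<subseteq> {1..K} \<union> B"
  proof
    fix N assume N: "N \<in> {1..s} - robin_set"
    show "N \<in> {1..K} \<union> B"
    proof (cases "N \<le> K")
      case True thus ?thesis using N by auto
    next
      case False
      hence N2: "2 < N" "K < N" using K by auto
      hence nr: "real (divisor_sum N) \<ge> c * real N * ln (ln (real N))"
        using N unfolding robin_set_def c_def by auto
      have "ln (ln (real K)) \<le> ln (ln (real N))"
        using lnK N2 K by (subst ln_le_cancel_iff) auto
      hence "L \<le> c * ln (ln (real N))" unfolding L_def using c0 by simp
      also have "\<dots> \<le> real (divisor_sum N) / real N"
        using nr N2 by (simp add: le_divide_eq mult.commute mult.left_commute)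
      finally show ?thesis using N N2 unfolding B_def by auto
    qed
  qed
  have "card ({1..s} - robin_set) \<le> card ({1..K} \<union> B)"
    by (rule card_mono[OF _ sub]) (auto simp: B_def)
  also have "\<dots> \<le> card {1..K} + card B" by (rule card_Un_le)
  finally have c1: "real (card ({1..s} - robin_set)) \<le> real K + real (card B)"
    by (metis card_atLeastAtMost diff_Suc_1 of_nat_add of_nat_le_iff)
  have "real (card B) * L = (\<Sum>N\<in>B. L)" by simp
  also have "\<dots> \<le> (\<Sum>N\<in>B. real (divisor_sum N) / real N)"
    by (rule sum_mono) (auto simp: B_def)
  also have "\<dots> \<le> (\<Sum>N\<in>{1..s}. real (divisor_sum N) / real N)"
    by (rule sum_mono2) (auto simp: B_def)
  also have "\<dots> \<le> 2 * real s" by (rule avg_bound)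
  finally have "real (card B) \<le> 2 * real s / L" using L0 by (simp add: le_divide_eq)
  thus ?thesis using c1 unfolding L_def c_def by simp
qed

theorem mainTheorem6:
  shows "(\<lambda>s. real (card (robin_set \<inter> {1..s})) / real s) \<longlonglongrightarrow> 1"
proof (rule LIMSEQ_I)
  fix r :: real assume r: "r > 0"
  define c :: real where "c = exp euler_mascheroni"
  have c0: "c > 0" unfolding c_def by simp
  define K where "K = max 3 (nat \<lceil>exp (exp (4/(c*r) + 1))\<rceil>)"
  have K3: "K \<ge> 3" unfolding K_def by simp
  have "exp (exp (4/(c*r) + 1)) \<le> real (nat \<lceil>exp (exp (4/(c*r) + 1))\<rceil>)" by linarith
  also have "\<dots> \<le> real K" unfolding K_def by simp
  finally have "real K \<ge> exp (exp (4/(c*r) + 1))" .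
  hence "ln (real K) \<ge> exp (4/(c*r) + 1)"
    using ln_le_cancel_iff[of "exp (exp (4/(c*r) + 1))" "real K"] K3 by simp
  hence LL: "ln (ln (real K)) \<ge> 4/(c*r) + 1"
  proof -
    assume h: "ln (real K) \<ge> exp (4/(c*r) + 1)"
    have "ln (exp (4/(c*r) + 1)) \<le> ln (ln (real K))"
      by (rule ln_mono[OF h exp_gt_zero])
    thus ?thesis by simp
  qed
  have LLp: "ln (ln (real K)) > 0" using LL c0 r by (smt (verit) divide_pos_pos mult_pos_pos)
  have t2: "2 / (c * ln (ln (real K))) < r / 2"
  proof -
    have "4/(c*r) < ln (ln (real K))" using LL by simp
    hence "4 < ln (ln (real K)) * (c * r)" using c0 r by (simp add: divide_less_eq)
    thus ?thesis using c0 r LLp by (simp add: divide_less_eq field_simps)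
  qed
  define n0 where "n0 = nat \<lceil>4 * real K / r\<rceil> + 1"
  show "\<exists>no. \<forall>n\<ge>no. norm (real (card (robin_set \<inter> {1..n})) / real n - 1) < r"
  proof (intro exI allI impI)
    fix n assume n: "n \<ge> n0"
    have n1: "n \<ge> 1" using n unfolding n0_def by simp
    have "4 * real K / r \<le> real (nat \<lceil>4 * real K / r\<rceil>)" by linarith
    hence "4 * real K / r < real n" using n unfolding n0_def by linarith
    hence Kn: "real K / real n < r / 4" using r n1 by (simp add: field_simps)
    have fin: "finite {1..n}" by simp
    have split: "card (robin_set \<inter> {1..n}) + card ({1..n} - robin_set) = n"
      using card_Int_Diff[OF fin, of robin_set] by (simp add: Int_commute)
    define b where "b = real (card ({1..n} - robin_set))"
    have rat: "real (card (robin_set \<inter> {1..n})) / real n - 1 = - (b / real n)"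
    proof -
      have "real (card (robin_set \<inter> {1..n})) = real n - b" using split unfolding b_def
        by (metis add_diff_cancel_right' of_nat_add)
      thus ?thesis using n1 by (simp add: diff_divide_distrib)
    qed
    have b0: "b \<ge> 0" unfolding b_def by simp
    have "b \<le> real K + 2 * real n / (c * ln (ln (real K)))"
      using bad_bound[OF K3, of n] unfolding b_def c_def by simp
    hence "b / real n \<le> (real K + 2 * real n / (c * ln (ln (real K)))) / real n"
      using n1 by (intro divide_right_mono) auto
    also have "\<dots> = real K / real n + 2 / (c * ln (ln (real K)))"
      using n1 by (simp add: add_divide_distrib)
    finally have "b / real n \<le> real K / real n + 2 / (c * ln (ln (real K)))" .
    also have "\<dots> < r" using Kn t2 r by linarith
    finally show "norm (real (card (robin_set \<inter> {1..n})) / real n - 1) < r"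
      using rat b0 n1 by simp
  qed
qed

end
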